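(* Let $l_0\in\mathbb N$ and $G\in\operatorname{2\text{-}d\text{-}Ring}_{l_0}$. If $l_0\ge2$ is even, the vertices alternate between black and white along the cyclic ring order of $G$. If $l_0$ is odd, the colours alternate along the cyclic ring order except for exactly one pair of cyclically consecutive vertices which are both black.
   Context: For a finite vertex set $V$ and $N\ge1$, a route through $V$ of length $N$ is a sequence $\mathbf i=(i_1,\dots,i_N)\in V^N$ whose set of entries equals $V$; its circuit multigraph $G_{\mathbf i}$ has vertex set $V$ and edges $1,\dots,N$, edge $k<N$ from $i_k$ to $i_{k+1}$, edge $N$ from $i_N$ to $i_1$; $\mathcal C_{V,N}$ is the set of these. The black vertices are $B(G_{\mathbf i})=\{i_t:t\text{ odd}\}$, the others white. An undirected connection between $v,w$ (possibly $v=w$) exists if $G$ has an edge from $v$ to $w$ or from $w$ to $v$; $\operatorname U(G)$ is the simple undirected graph (loops allowed) with an edge per undirected connection. A directed multigraph is balanced if its edges split into pairs $(e,e')$ with the head of $e$ the tail of $e'$ and vice versa. $G\in\mathcal C_{V,2l_0}$ with $\#V=l_0$ is of ring-type if $\operatorname U(G)$ is a cycle through all $l_0$ vertices (for $l_0=1$ a single loop, for $l_0=2$ a single edge) and each undirected connection consists of exactly two edges of $G$; $\operatorname{2\text{-}d\text{-}Ring}_{l_0}$ is the set of balanced ring-type graphs with $l_0$ vertices. The ring order is the cyclic order of the vertices along this cycle (for $l_0=1$ the single vertex is consecutive to itself). *)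

theory Defs
  imports Main
begin

text \<open>A route through V of length N is a list i of length N (0-indexed: entry k is
  the paper's i_(k+1)) whose set of entries is V.  Edge k (k < N) of the circuit
  multigraph G_i goes from i!k to i!((k+1) mod N).\<close>

definition is_route :: "'a set \<Rightarrow> nat \<Rightarrow> 'a list \<Rightarrow> bool" where
  "is_route V N i \<longleftrightarrow> N \<ge> 1 \<and> length i = N \<and> set i = V"

definition etail :: "'a list \<Rightarrow> nat \<Rightarrow> 'a" where
  "etail i k = i ! k"

definition ehead :: "'a list \<Rightarrow> nat \<Rightarrow> 'a" where
  "ehead i k = i ! (Suc k mod length i)"

text \<open>Black vertices: i_t with t odd (1-indexed), i.e. list positions k even.\<close>
definition black :: "'a list \<Rightarrow> 'a set" where
  "black i = {i ! k | k. k < length i \<and> even k}"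

text \<open>Undirected connection carried by edge k (a loop is the singleton set).\<close>
definition uconn :: "'a list \<Rightarrow> nat \<Rightarrow> 'a set" where
  "uconn i k = {etail i k, ehead i k}"

definition UE :: "'a list \<Rightarrow> 'a set set" where
  "UE i = uconn i ` {..<length i}"

definition balanced :: "'a list \<Rightarrow> bool" where
  "balanced i \<longleftrightarrow> (\<exists>p. \<forall>k < length i. p k < length i \<and> p k \<noteq> k \<and> p (p k) = k
       \<and> ehead i k = etail i (p k) \<and> etail i k = ehead i (p k))"

text \<open>c is a ring order: a cyclic enumeration of V such that U(G_i) is exactly the
  cycle c 0, c 1, ..., c (l0-1), c 0 (for l0 = 1 a loop, for l0 = 2 one edge).\<close>
definition ring_order :: "'a set \<Rightarrow> 'a list \<Rightarrow> (nat \<Rightarrow> 'a) \<Rightarrow> bool" where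
  "ring_order V i c \<longleftrightarrow> bij_betw c {..<card V} V \<and>
     UE i = {{c j, c (Suc j mod card V)} | j. j < card V}"

definition ring_type :: "'a set \<Rightarrow> 'a list \<Rightarrow> bool" where
  "ring_type V i \<longleftrightarrow> finite V \<and> is_route V (2 * card V) i \<and> (\<exists>c. ring_order V i c) \<and>
     (\<forall>e \<in> UE i. card {k. k < length i \<and> uconn i k = e} = 2)"

definition two_d_ring :: "nat \<Rightarrow> 'a set \<Rightarrow> 'a list \<Rightarrow> bool" where
  "two_d_ring l0 V i \<longleftrightarrow> card V = l0 \<and> ring_type V i \<and> balanced i"

end

theory Submission
  imports Defs
begin


lemma s_char:
  fixes n :: nat and q s t :: int
  assumes "n > 0" "0 \<le> s" "s \<le> int n"
  shows "int n dvd (q + s - t) \<longleftrightarrow> s = (t - q) mod int n \<or> (s = int n \<and> (t - q) mod int n = 0)"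
proof -
  have "int n dvd (q + s - t) \<longleftrightarrow> s mod int n = (t - q) mod int n"
    using mod_eq_dvd_iff[of s "int n" "t - q"] by (simp add: algebra_simps)
  moreover have "s mod int n = (if s = int n then 0 else s)"
    using assms by auto
  moreover have "(t - q) mod int n < int n" using assms by simp
  ultimately show ?thesis by auto
qed

definition PP :: "nat \<Rightarrow> int \<Rightarrow> int \<Rightarrow> int \<Rightarrow> bool" where
  "PP n a q t \<longleftrightarrow> (\<exists>s. 0 \<le> s \<and> s \<le> int n \<and> even (a + s) \<and> int n dvd (q + s - t))"

lemma PP_char:
  assumes "n > 0"
  shows "PP n a q t \<longleftrightarrow> even (a + (t - q) mod int n) \<or> ((t - q) mod int n = 0 \<and> even (a + int n))"
proof -
  have r: "0 \<le> (t - q) mod int n" "(t - q) mod int n < int n" using assms by simp_all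
  show ?thesis
    unfolding PP_def using s_char[OF assms] r
    by (smt (verit))
qed

lemma r_suc:
  assumes "n > 0"
  shows "(t + 1 - q) mod int n = (if (t - q) mod int n = int n - 1 then 0 else (t - q) mod int n + 1)"
proof -
  have "(t + 1 - q) mod int n = ((t - q) mod int n + 1) mod int n"
    by (metis add.commute add_diff_eq mod_add_right_eq)
  moreover have "0 \<le> (t - q) mod int n" "(t - q) mod int n < int n" using assms by simp_all
  ultimately show ?thesis
    by (smt (verit) mod_pos_pos_trivial mod_self)
qed

lemma PP_even:
  assumes "n > 0" "even n"
  shows "PP n a q t \<longleftrightarrow> \<not> PP n a q (t + 1)"
proof -
  define r where "r = (t - q) mod int n"
  have r: "0 \<le> r" "r < int n" using assms r_def by simp_all
  have rs: "(t + 1 - q) mod int n = (if r = int n - 1 then 0 else r + 1)"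
    using r_suc[OF assms(1)] r_def by simp
  have en: "even (int n)" using assms by simp
  show ?thesis
    unfolding PP_char[OF assms(1)] rs r_def[symmetric] using en r
    by (cases "r = int n - 1") auto
qed

lemma PP_odd1:
  assumes "n > 0" "odd n"
  shows "(PP n a q t \<and> PP n a q (t + 1)) \<longleftrightarrow>
     ((t - q) mod int n = (if odd a then 0 else int n - 1))"
proof -
  define r where "r = (t - q) mod int n"
  have r: "0 \<le> r" "r < int n" using assms r_def by simp_all
  have rs: "(t + 1 - q) mod int n = (if r = int n - 1 then 0 else r + 1)"
    using r_suc[OF assms(1)] r_def by simp
  have en: "odd (int n)" using assms by simp
  show ?thesis
    unfolding PP_char[OF assms(1)] rs r_def[symmetric] using en r
    by (cases "r = int n - 1"; cases "r = 0") auto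
qed

lemma PP_odd2:
  assumes "n > 0" "odd n"
  shows "PP n a q t \<or> PP n a q (t + 1)"
proof -
  define r where "r = (t - q) mod int n"
  have r: "0 \<le> r" "r < int n" using assms r_def by simp_all
  have rs: "(t + 1 - q) mod int n = (if r = int n - 1 then 0 else r + 1)"
    using r_suc[OF assms(1)] r_def by simp
  have en: "odd (int n)" using assms by simp
  show ?thesis
    unfolding PP_char[OF assms(1)] rs r_def[symmetric] using en r
    by (cases "r = int n - 1"; cases "r = 0") auto
qed

lemma PP_count:
  assumes "n > 0" "odd n"
  shows "card {j. j < n \<and> PP n a q (int j) \<and> PP n a q (int j + 1)} = 1"
proof -
  define rho where "rho = (if odd a then 0 else int n - 1)"
  have rho: "0 \<le> rho" "rho < int n" using assms rho_def by auto
  define j0 where "j0 = nat ((q + rho) mod int n)"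
  have m: "0 \<le> (q + rho) mod int n" "(q + rho) mod int n < int n" using assms by simp_all
  have j0: "j0 < n" "int j0 = (q + rho) mod int n" using m j0_def by (auto simp: nat_less_iff)
  have "{j. j < n \<and> PP n a q (int j) \<and> PP n a q (int j + 1)} = {j0}"
  proof (intro set_eqI iffI)
    fix j assume "j \<in> {j. j < n \<and> PP n a q (int j) \<and> PP n a q (int j + 1)}"
    then have jn: "j < n" and "(int j - q) mod int n = rho"
      using PP_odd1[OF assms] rho_def by auto
    then have "int n dvd (int j - q - rho)"
      using mod_eq_dvd_iff[of "int j - q" "int n" rho] rho by simp
    then have "int j mod int n = (q + rho) mod int n"
      using mod_eq_dvd_iff[of "int j" "int n" "q + rho"] by (simp add: algebra_simps)
    then have "int j = int j0" using jn j0 by simp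
    then show "j \<in> {j0}" by simp
  next
    fix j assume "j \<in> {j0}"
    then have jj: "j = j0" by simp
    have "int n dvd (int j0 - (q + rho))"
      using j0(2) mod_eq_dvd_iff[of "int j0" "int n" "q + rho"] j0(1) by simp
    then have "(int j0 - q) mod int n = rho mod int n"
      using mod_eq_dvd_iff[of "int j0 - q" "int n" rho] by (simp add: algebra_simps)
    then have "(int j0 - q) mod int n = rho" using rho by simp
    then show "j \<in> {j. j < n \<and> PP n a q (int j) \<and> PP n a q (int j + 1)}"
      using PP_odd1[OF assms] rho_def jj j0 by auto
  qed
  then show ?thesis by simp
qed



lemma dvd2_false: "int n \<ge> 3 \<Longrightarrow> int n dvd (2::int) \<Longrightarrow> False"
  using zdvd_imp_le[of "int n" 2] by simp

lemma dvdm2_false: "int n \<ge> 3 \<Longrightarrow> int n dvd (-2::int) \<Longrightarrow> False"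
  using dvd2_false by (metis dvd_minus_iff)

locale ringwalk =
  fixes f :: "nat \<Rightarrow> 'a" and g :: "int \<Rightarrow> 'a" and n N :: nat and z0 :: int
  assumes g_eq: "\<And>x y. g x = g y \<longleftrightarrow> int n dvd (x - y)"
    and n3: "n \<ge> 3" and NN: "N = 2*n"
    and f0: "f 0 = g z0"
    and step: "\<And>k. \<exists>w. {f k, f (Suc k)} = {g w, g (w+1)}"
    and inv: "\<exists>p. \<forall>k<N. p k < N \<and> p (p k) = k \<and> f (p k) = f (Suc k) \<and> f (Suc (p k)) = f k"
    and card2: "\<And>w. card {k. k < N \<and> {f k, f (Suc k)} = {g w, g (w+1)}} \<le> 2"
    and cover: "\<And>w. \<exists>k<N. {f k, f (Suc k)} = {g w, g (w+1)}"
begin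

fun h :: "nat \<Rightarrow> int" where
  "h 0 = 0"
| "h (Suc k) = (if f (Suc k) = g (z0 + h k + 1) then h k + 1 else h k - 1)"

lemma n3': "int n \<ge> 3" using n3 by simp

lemma g_mod: "g x = g y \<longleftrightarrow> x mod int n = y mod int n"
  using g_eq mod_eq_dvd_iff by blast

lemma g_ne: "g (u + 1) \<noteq> g (u - 1)"
  using g_eq[of "u+1" "u-1"] dvd2_false[OF n3'] by auto

lemma g_ne1: "g u \<noteq> g (u + 1)"
  using g_eq[of u "u+1"] dvdm2_false n3' dvd2_false by (simp add: dvd_minus_iff)

lemma nb_gen:
  assumes "f k = g u" shows "f (Suc k) = g (u+1) \<or> f (Suc k) = g (u - 1)"
proof -
  obtain w where w: "{f k, f (Suc k)} = {g w, g (w+1)}" using step by blast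
  show ?thesis
  proof (cases "f k = g w")
    case True
    then have "f (Suc k) = g (w+1)" using w g_ne1[of w]
      by (auto simp: doubleton_eq_iff)
    moreover have "g (w+1) = g (u + 1)" using True assms g_mod
      by (metis mod_add_left_eq)
    ultimately show ?thesis by simp
  next
    case False
    then have a: "f k = g (w+1)" "f (Suc k) = g w" using w by (auto simp: doubleton_eq_iff)
    have "g w = g (u - 1)" using a assms g_mod
      by (metis mod_diff_left_eq add_diff_cancel_right')
    then show ?thesis using a by simp
  qed
qed

lemma L1: "f k = g (z0 + h k)"
proof (induction k)
  case 0
  then show ?case using f0 by simp
next
  case (Suc k)
  show ?case
  proof (cases "f (Suc k) = g (z0 + h k + 1)")
    case True
    then show ?thesis by (simp add: add.assoc)
  next
    case False
    then have "f (Suc k) = g (z0 + h k - 1)" using nb_gen[OF Suc] by blast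
    moreover have "h (Suc k) = h k - 1" using False by simp
    ultimately show ?thesis by (metis add_diff_eq)
  qed
qed

lemma hstep: "h (Suc k) = h k + 1 \<or> h (Suc k) = h k - 1"
  by simp

lemma hpar: "even (h k) \<longleftrightarrow> even k"
  by (induction k) auto

declare h.simps(2)[simp del]

lemma hN: "h N = 0"
proof -
  obtain p where p: "\<forall>k<N. p k < N \<and> p (p k) = k \<and> f (p k) = f (Suc k) \<and> f (Suc (p k)) = f k"
    using inv by blast
  define D where "D k = h (Suc k) - h k" for k
  have D: "D k = 1 \<or> D k = -1" for k unfolding D_def using hstep[of k] by auto
  have Dp: "D (p k) = - D k" if "k < N" for k
  proof -
    have e1: "f (p k) = f (Suc k)" and e2: "f (Suc (p k)) = f k" using p that by auto
    have h1: "z0 + h (Suc k) = z0 + h k + D k" "z0 + h (Suc (p k)) = z0 + h (p k) + D (p k)"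
      unfolding D_def by simp_all
    have a: "g (z0 + h (p k)) = g (z0 + h k + D k)"
      using L1[of "p k"] L1[of "Suc k"] e1 h1(1) by metis
    have b: "g (z0 + h (p k) + D (p k)) = g (z0 + h k)"
      using L1[of "Suc (p k)"] L1[of k] e2 h1(2) by metis
    from a b have "int n dvd (z0 + h (p k) - (z0 + h k + D k))"
      "int n dvd (z0 + h (p k) + D (p k) - (z0 + h k))" using g_eq by auto
    then have "int n dvd ((z0 + h (p k) + D (p k) - (z0 + h k)) - (z0 + h (p k) - (z0 + h k + D k)))"
      by (rule dvd_diff[rotated])
    then have dd: "int n dvd (D k + D (p k))" by (simp add: algebra_simps)
    show ?thesis using D[of k] D[of "p k"] dd dvd2_false[OF n3'] dvdm2_false[OF n3'] by auto
  qed
  have t: "(\<Sum>k<N. D k) = h N - h 0" unfolding D_def by (rule sum_lessThan_telescope)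
  have "(\<Sum>k<N. D k) = (\<Sum>k<N. D (p k))"
    by (rule sum.reindex_bij_witness[of _ p p]) (use p in auto)
  also have "\<dots> = (\<Sum>k<N. - D k)" using Dp by (intro sum.cong) auto
  also have "\<dots> = - (\<Sum>k<N. D k)" by (simp add: sum_negf)
  finally have "(\<Sum>k<N. D k) = 0" by simp
  then show ?thesis using t by simp
qed

lemma up_cross:
  "m1 \<le> m2 \<Longrightarrow> h m1 \<le> v \<Longrightarrow> v < h m2 \<Longrightarrow> \<exists>m. m1 \<le> m \<and> m < m2 \<and> h m = v \<and> h (Suc m) = v + 1"
proof (induction m2)
  case 0
  then show ?case by simp
next
  case (Suc m2)
  show ?case
  proof (cases "m1 = Suc m2")
    case True
    then show ?thesis using Suc.prems by simp
  next
    case False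
    then have m: "m1 \<le> m2" using Suc.prems by simp
    show ?thesis
    proof (cases "v < h m2")
      case True
      then show ?thesis using Suc.IH m Suc.prems by (metis less_SucI)
    next
      case False
      then have "h m2 = v" "h (Suc m2) = v + 1" using Suc.prems hstep[of m2] by auto
      then show ?thesis using m by blast
    qed
  qed
qed

lemma down_cross:
  "m1 \<le> m2 \<Longrightarrow> v < h m1 \<Longrightarrow> h m2 \<le> v \<Longrightarrow> \<exists>m. m1 \<le> m \<and> m < m2 \<and> h m = v + 1 \<and> h (Suc m) = v"
proof (induction m2)
  case 0
  then show ?case by simp
next
  case (Suc m2)
  show ?case
  proof (cases "m1 = Suc m2")
    case True
    then show ?thesis using Suc.prems by simp
  next
    case False
    then have m: "m1 \<le> m2" using Suc.prems by simp
    show ?thesis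
    proof (cases "h m2 \<le> v")
      case True
      then show ?thesis using Suc.IH m Suc.prems by (metis less_SucI)
    next
      case False
      then have "h m2 = v + 1" "h (Suc m2) = v" using Suc.prems hstep[of m2] by auto
      then show ?thesis using m by blast
    qed
  qed
qed

lemma upc:
  assumes "m1 \<le> N" "m2 \<le> N" "h m1 \<le> v" "v < h m2"
  shows "\<exists>m<N. h m = v \<and> h (Suc m) = v + 1"
proof (cases "m1 \<le> m2")
  case True
  then show ?thesis using up_cross[OF True assms(3,4)] assms(2) by force
next
  case False
  show ?thesis
  proof (cases "h 0 \<le> v")
    case True
    then show ?thesis using up_cross[OF _ True assms(4)] assms False by force
  next
    case F: False
    then have "v < h N" using hN by simp
    then show ?thesis using up_cross[OF assms(1) assms(3)] by blast
  qed
qed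

lemma downc:
  assumes "m1 \<le> N" "m2 \<le> N" "v < h m1" "h m2 \<le> v"
  shows "\<exists>m<N. h m = v + 1 \<and> h (Suc m) = v"
proof (cases "m1 \<le> m2")
  case True
  then show ?thesis using down_cross[OF True assms(3,4)] assms(2) by force
next
  case False
  show ?thesis
  proof (cases "v < h 0")
    case True
    then show ?thesis using down_cross[OF _ True assms(4)] assms False by force
  next
    case F: False
    then have "h N \<le> v" using hN by simp
    then show ?thesis using down_cross[OF assms(1) assms(3)] by blast
  qed
qed

definition amin where "amin = Min (h ` {..N})"
definition bmax where "bmax = Max (h ` {..N})"

lemma ab_bounds: "k \<le> N \<Longrightarrow> amin \<le> h k \<and> h k \<le> bmax"
  unfolding amin_def bmax_def by (auto intro: Min_le Max_ge)

lemma amin_att: "\<exists>k\<le>N. h k = amin"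
proof -
  have "amin \<in> h ` {..N}" unfolding amin_def by (rule Min_in) auto
  then show ?thesis by auto
qed

lemma bmax_att: "\<exists>k\<le>N. h k = bmax"
proof -
  have "bmax \<in> h ` {..N}" unfolding bmax_def by (rule Max_in) auto
  then show ?thesis by auto
qed

lemma ivt:
  assumes "amin \<le> v" "v \<le> bmax"
  shows "\<exists>k<N. h k = v"
proof -
  obtain ka where ka: "ka \<le> N" "h ka = amin" using amin_att by blast
  obtain kb where kb: "kb \<le> N" "h kb = bmax" using bmax_att by blast
  have N0: "N > 0" using n3 NN by simp
  show ?thesis
  proof (cases "v = bmax")
    case True
    show ?thesis
    proof (cases "kb = N")
      case True
      then show ?thesis using kb hN \<open>v = bmax\<close> N0 by (intro exI[of _ 0]) auto
    next
      case False
      then show ?thesis using kb \<open>v = bmax\<close> by (intro exI[of _ kb]) auto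
    qed
  next
    case False
    then have "v < h kb" using assms kb by simp
    then show ?thesis using upc[OF ka(1) kb(1)] ka assms by force
  qed
qed

lemma Ek: "{f k, f (Suc k)} = {g (z0 + min (h k) (h (Suc k))), g (z0 + min (h k) (h (Suc k)) + 1)}"
proof (cases "h (Suc k) = h k + 1")
  case True
  then show ?thesis using L1[of k] L1[of "Suc k"] by (simp add: add.assoc)
next
  case False
  then have hs: "h (Suc k) = h k - 1" using hstep[of k] by blast
  then have m: "min (h k) (h (Suc k)) = h k - 1" by simp
  have e: "z0 + (h k - 1) + 1 = z0 + h k" by simp
  show ?thesis unfolding m e L1[of k] L1[of "Suc k"] unfolding hs by (rule insert_commute)
qed

lemma bmax_ge: "int n \<le> bmax - amin"
proof -
  have sub: "{0..<int n} \<subseteq> (\<lambda>L. (z0 + L) mod int n) ` {amin..<bmax}"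
  proof
    fix t assume t: "t \<in> {0..<int n}"
    obtain k where k: "k < N" "{f k, f (Suc k)} = {g t, g (t+1)}" using cover by blast
    define L where "L = min (h k) (h (Suc k))"
    have e: "{g (z0 + L), g (z0 + L + 1)} = {g t, g (t+1)}" using Ek[of k] k L_def by simp
    have "g (z0 + L) = g t"
    proof (rule ccontr)
      assume "g (z0 + L) \<noteq> g t"
      then have "g (z0 + L) = g (t+1)" "g (z0 + L + 1) = g t" using e by (auto simp: doubleton_eq_iff)
      then have "int n dvd (z0 + L - (t + 1))" "int n dvd (z0 + L + 1 - t)" using g_eq by auto
      then have "int n dvd ((z0 + L + 1 - t) - (z0 + L - (t + 1)))" by (rule dvd_diff[rotated])
      then show False using dvd2_false[OF n3'] by simp
    qed
    then have "(z0 + L) mod int n = t mod int n" using g_mod by blast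
    also have "\<dots> = t" using t by simp
    finally have 1: "(z0 + L) mod int n = t" .
    have "amin \<le> L" using ab_bounds[of k] ab_bounds[of "Suc k"] k L_def by auto
    moreover have "L < bmax" using ab_bounds[of k] ab_bounds[of "Suc k"] k L_def hstep[of k] by auto
    ultimately show "t \<in> (\<lambda>L. (z0 + L) mod int n) ` {amin..<bmax}" using 1 by force
  qed
  have "n = card {0..<int n}" by simp
  also have "\<dots> \<le> card ((\<lambda>L. (z0 + L) mod int n) ` {amin..<bmax})"
    by (rule card_mono[OF _ sub]) simp
  also have "\<dots> \<le> card {amin..<bmax}" by (rule card_image_le) simp
  also have "\<dots> = nat (bmax - amin)" by simp
  finally show ?thesis using n3 by (cases "0 \<le> bmax - amin") (auto simp: le_nat_iff)
qed

lemma bmax_le: "bmax - amin \<le> int n"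
proof (rule ccontr)
  assume "\<not> bmax - amin \<le> int n"
  then have lt: "amin + int n < bmax" by simp
  obtain ka where ka: "ka \<le> N" "h ka = amin" using amin_att by blast
  obtain kb where kb: "kb \<le> N" "h kb = bmax" using bmax_att by blast
  define w where "w = z0 + amin"
  define Ew where "Ew = {g w, g (w+1)}"
  have gw: "g (z0 + (amin + int n)) = g w" "g (z0 + (amin + int n) + 1) = g (w + 1)"
    unfolding w_def using g_eq by (simp_all add: algebra_simps)
  obtain m1 where m1: "m1 < N" "h m1 = amin" "h (Suc m1) = amin + 1"
    using upc[OF ka(1) kb(1), of amin] ka kb lt by auto
  obtain m2 where m2: "m2 < N" "h m2 = amin + 1" "h (Suc m2) = amin"
    using downc[OF kb(1) ka(1), of amin] ka kb lt by auto
  obtain m3 where m3: "m3 < N" "h m3 = amin + int n" "h (Suc m3) = amin + int n + 1"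
    using upc[OF ka(1) kb(1), of "amin + int n"] ka kb lt by auto
  obtain m4 where m4: "m4 < N" "h m4 = amin + int n + 1" "h (Suc m4) = amin + int n"
    using downc[OF kb(1) ka(1), of "amin + int n"] ka kb lt by auto
  have E1: "{f m1, f (Suc m1)} = Ew" using L1[of m1] L1[of "Suc m1"] m1 unfolding Ew_def w_def
    by (simp add: add.assoc)
  have E2: "{f m2, f (Suc m2)} = Ew" using L1[of m2] L1[of "Suc m2"] m2 unfolding Ew_def w_def
    by (auto simp add: add.assoc)
  have E3: "{f m3, f (Suc m3)} = Ew" using L1[of m3] L1[of "Suc m3"] m3 gw unfolding Ew_def
    by (simp add: add.assoc)
  have E4: "{f m4, f (Suc m4)} = Ew" using L1[of m4] L1[of "Suc m4"] m4 gw unfolding Ew_def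
    by (auto simp add: add.assoc)
  have d: "m1 \<noteq> m2" "m1 \<noteq> m3" "m1 \<noteq> m4" "m2 \<noteq> m3" "m2 \<noteq> m4" "m3 \<noteq> m4"
    using m1 m2 m3 m4 n3 by auto
  have "{m1, m2, m3, m4} \<subseteq> {k. k < N \<and> {f k, f (Suc k)} = Ew}"
    using E1 E2 E3 E4 m1 m2 m3 m4 by auto
  then have "card {m1, m2, m3, m4} \<le> card {k. k < N \<and> {f k, f (Suc k)} = Ew}"
    by (rule card_mono[rotated]) simp
  moreover have "card {m1, m2, m3, m4} = 4" using d by simp
  moreover have "card {k. k < N \<and> {f k, f (Suc k)} = Ew} \<le> 2" unfolding Ew_def by (rule card2)
  ultimately show False by simp
qed

definition B where "B = {f k | k. k < N \<and> even k}"

lemma black_char: "g t \<in> B \<longleftrightarrow> PP n amin (z0 + amin) t"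
proof
  assume "g t \<in> B"
  then obtain k where k: "k < N" "even k" "f k = g t" unfolding B_def by auto
  have "g (z0 + h k) = g t" using k L1 by simp
  then have dv: "int n dvd (z0 + h k - t)" using g_eq by simp
  have "amin \<le> h k" "h k \<le> amin + int n" using ab_bounds[of k] k bmax_le by auto
  moreover have "even (h k)" using hpar k by simp
  ultimately show "PP n amin (z0 + amin) t" unfolding PP_def using dv
    by (intro exI[of _ "h k - amin"]) (auto simp: algebra_simps)
next
  assume "PP n amin (z0 + amin) t"
  then obtain s where s: "0 \<le> s" "s \<le> int n" "even (amin + s)" "int n dvd (z0 + amin + s - t)"
    unfolding PP_def by blast
  obtain k where k: "k < N" "h k = amin + s" using ivt[of "amin + s"] s bmax_ge by auto
  have "even k" using hpar[of k] k s by simp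
  moreover have "f k = g t" using L1[of k] k s g_eq by (simp add: algebra_simps)
  ultimately show "g t \<in> B" unfolding B_def using k by force
qed

lemma main_even: "even n \<Longrightarrow> g t \<in> B \<longleftrightarrow> g (t + 1) \<notin> B"
  unfolding black_char using PP_even[of n amin "z0 + amin" t] n3 by simp

lemma main_odd1: "odd n \<Longrightarrow> card {j. j < n \<and> g (int j) \<in> B \<and> g (int j + 1) \<in> B} = 1"
  unfolding black_char using PP_count[of n] n3 by simp

lemma main_odd2: "odd n \<Longrightarrow> \<not> (g t \<in> B \<and> g (t + 1) \<in> B) \<Longrightarrow> (g t \<in> B \<longleftrightarrow> g (t + 1) \<notin> B)"
  unfolding black_char using PP_odd2[of n amin "z0 + amin" t] n3 by auto

end

lemma concrete3:
  fixes i :: "'a list" and c :: "nat \<Rightarrow> 'a" and n :: nat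
  assumes len: "length i = 2 * n" and n3: "n \<ge> 3" and inj: "inj_on c {..<n}"
    and img: "c ` {..<n} = set i"
    and UEi: "UE i = {{c j, c (Suc j mod n)} | j. j < n}"
    and crd: "\<forall>e \<in> UE i. card {k. k < length i \<and> uconn i k = e} = 2"
    and bal: "balanced i"
  shows "(even n \<longrightarrow> (\<forall>j < n. c j \<in> black i \<longleftrightarrow> c (Suc j mod n) \<notin> black i))
       \<and> (odd n \<longrightarrow>
            card {j. j < n \<and> c j \<in> black i \<and> c (Suc j mod n) \<in> black i} = 1
          \<and> (\<forall>j < n. \<not> (c j \<in> black i \<and> c (Suc j mod n) \<in> black i)
                 \<longrightarrow> (c j \<in> black i \<longleftrightarrow> c (Suc j mod n) \<notin> black i)))"
proof -
  define N where "N = 2 * n"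
  define f where "f k = i ! (k mod N)" for k
  define g where "g z = c (nat (z mod int n))" for z
  have npos: "n > 0" using n3 by simp
  have gj: "g (int j) = c j" if "j < n" for j
  proof -
    have a: "nat (int j mod int n) = j mod n" by (metis nat_int zmod_int)
    show ?thesis unfolding g_def a using that by simp
  qed
  have gw: "g w = c (nat (w mod int n))" for w unfolding g_def by simp
  have gw1: "g (w + 1) = c (Suc (nat (w mod int n)) mod n)" for w
  proof -
    have e: "int (nat (w mod int n)) = w mod int n" using npos by simp
    have gen: "\<And>m::nat. int m + 1 = int (Suc m)" by simp
    have "(w + 1) mod int n = (w mod int n + 1) mod int n" by (metis mod_add_left_eq)
    also have "\<dots> = (int (nat (w mod int n)) + 1) mod int n" by (simp only: e)
    also have "\<dots> = int (Suc (nat (w mod int n))) mod int n" by (simp only: gen)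
    also have "\<dots> = int (Suc (nat (w mod int n)) mod n)" by (rule zmod_int[symmetric])
    finally have "(w + 1) mod int n = int (Suc (nat (w mod int n)) mod n)" .
    then show ?thesis unfolding g_def by simp
  qed
  have gj1: "g (int j + 1) = c (Suc j mod n)" for j
  proof -
    have a: "nat (int j mod int n) = j mod n" by (metis nat_int zmod_int)
    show ?thesis using gw1[of "int j"] unfolding a mod_Suc_eq .
  qed
  have wlt: "nat (w mod int n) < n" for w proof -
    have "0 \<le> w mod int n" "w mod int n < int n" using npos by simp_all
    then show ?thesis by (simp add: nat_less_iff)
  qed
  have g_eq: "g x = g y \<longleftrightarrow> int n dvd (x - y)" for x y
  proof -
    have "g x = g y \<longleftrightarrow> nat (x mod int n) = nat (y mod int n)"
      using inj_on_eq_iff[OF inj, of "nat (x mod int n)" "nat (y mod int n)"] wlt[of x] wlt[of y]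
      unfolding g_def by simp
    also have "\<dots> \<longleftrightarrow> x mod int n = y mod int n" using npos by (simp add: eq_nat_nat_iff)
    also have "\<dots> \<longleftrightarrow> int n dvd (x - y)" by (rule mod_eq_dvd_iff)
    finally show ?thesis .
  qed
  have "i ! 0 \<in> set i" using len n3 by simp
  then obtain j0 where j0: "j0 < n" "i ! 0 = c j0" using img by auto
  have f0: "f 0 = g (int j0)" unfolding f_def using j0 gj[of j0] by simp
  have fk: "f k = i ! k" if "k < N" for k unfolding f_def using that by simp
  have fS: "f (Suc k) = ehead i k" if "k < N" for k unfolding f_def ehead_def N_def len by simp
  have uc: "uconn i (k mod N) = {f k, f (Suc k)}" for k
    unfolding uconn_def etail_def ehead_def f_def N_def len mod_Suc_eq ..
  have Npos: "N > 0" using npos N_def by simp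
  have uk: "uconn i k = {f k, f (Suc k)}" if "k < N" for k using uc[of k] that by simp
  have UEg: "{g w, g (w + 1)} \<in> UE i" for w
    unfolding UEi gw1 unfolding gw by (intro CollectI exI[of _ "nat (w mod int n)"] conjI refl wlt)
  interpret rw: ringwalk f g n N "int j0"
  proof
    show "g x = g y \<longleftrightarrow> int n dvd (x - y)" for x y by (rule g_eq)
    show "n \<ge> 3" by (rule n3)
    show "N = 2 * n" by (rule N_def)
    show "f 0 = g (int j0)" by (rule f0)
    show "\<exists>w. {f k, f (Suc k)} = {g w, g (w+1)}" for k
    proof -
      have "k mod N < length i" using Npos len N_def by simp
      then have "uconn i (k mod N) \<in> UE i" unfolding UE_def by (rule imageI[OF lessThan_iff[THEN iffD2]])
      then obtain j where jn: "j < n" and eq: "uconn i (k mod N) = {c j, c (Suc j mod n)}"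
        unfolding UEi by blast
      show ?thesis
        by (rule exI[of _ "int j"]) (simp only: gj[OF jn] gj1 uc[symmetric] eq)
    qed
    show "\<exists>p. \<forall>k<N. p k < N \<and> p (p k) = k \<and> f (p k) = f (Suc k) \<and> f (Suc (p k)) = f k"
    proof -
      obtain p where p: "\<forall>k < length i. p k < length i \<and> p k \<noteq> k \<and> p (p k) = k
       \<and> ehead i k = etail i (p k) \<and> etail i k = ehead i (p k)"
        using bal unfolding balanced_def by blast
      have "\<forall>k<N. p k < N \<and> p (p k) = k \<and> f (p k) = f (Suc k) \<and> f (Suc (p k)) = f k"
      proof (intro allI impI)
        fix k assume k: "k < N"
        have kl: "k < length i" using k by (simp add: len N_def)
        have P: "p k < length i" "p (p k) = k" "ehead i k = etail i (p k)" "etail i k = ehead i (p k)"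
          using p[rule_format, OF kl] by blast+
        have pk: "p k < N" using P(1) by (simp add: len N_def)
        have e1: "f (p k) = f (Suc k)"
          using fk[OF pk] fS[OF k] P(3) unfolding etail_def by metis
        have e2: "f (Suc (p k)) = f k"
          using fk[OF k] fS[OF pk] P(4) unfolding etail_def by metis
        show "p k < N \<and> p (p k) = k \<and> f (p k) = f (Suc k) \<and> f (Suc (p k)) = f k"
          using pk P(2) e1 e2 by blast
      qed
      then show ?thesis by blast
    qed
    show "card {k. k < N \<and> {f k, f (Suc k)} = {g w, g (w+1)}} \<le> 2" for w
    proof -
      have "{k. k < N \<and> {f k, f (Suc k)} = {g w, g (w+1)}} = {k. k < length i \<and> uconn i k = {g w, g (w+1)}}"
        using uk len N_def by (intro Collect_cong) metis
      then show ?thesis using crd UEg[of w] by simp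
    qed
    show "\<exists>k<N. {f k, f (Suc k)} = {g w, g (w+1)}" for w
    proof -
      obtain k where "k < length i" "uconn i k = {g w, g (w+1)}"
        using UEg[of w] unfolding UE_def by auto
      then show ?thesis using uc[of k] len N_def by (metis mod_less)
    qed
  qed
  have BB: "rw.B = black i"
    unfolding rw.B_def black_def
  proof (intro set_eqI iffI)
    fix x assume "x \<in> {f k |k. k < N \<and> even k}"
    then obtain k where k: "x = f k" "k < N" "even k" by blast
    then show "x \<in> {i ! k |k. k < length i \<and> even k}"
      by (intro CollectI exI[of _ k]) (simp add: fk len N_def)
  next
    fix x assume "x \<in> {i ! k |k. k < length i \<and> even k}"
    then obtain k where k: "x = i ! k" "k < length i" "even k" by blast
    then show "x \<in> {f k |k. k < N \<and> even k}"
      by (intro CollectI exI[of _ k]) (simp add: fk len N_def)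
  qed
  show ?thesis
  proof (intro conjI impI allI)
    fix j assume "even n" "j < n"
    then show "c j \<in> black i \<longleftrightarrow> c (Suc j mod n) \<notin> black i"
      using rw.main_even[of "int j"] gj gj1 BB by simp
  next
    assume o: "odd n"
    have "{j. j < n \<and> c j \<in> black i \<and> c (Suc j mod n) \<in> black i}
        = {j. j < n \<and> g (int j) \<in> rw.B \<and> g (int j + 1) \<in> rw.B}"
      using gj gj1 BB by auto
    then show "card {j. j < n \<and> c j \<in> black i \<and> c (Suc j mod n) \<in> black i} = 1"
      using rw.main_odd1[OF o] by simp
  next
    fix j assume o: "odd n" and "j < n" and nb: "\<not> (c j \<in> black i \<and> c (Suc j mod n) \<in> black i)"
    then show "c j \<in> black i \<longleftrightarrow> c (Suc j mod n) \<notin> black i"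
      using rw.main_odd2[OF o, of "int j"] gj gj1 BB by simp
  qed
qed

theorem lemma4p8:
  fixes l0 :: nat and V :: "'a set" and i :: "'a list" and c :: "nat \<Rightarrow> 'a"
  assumes "two_d_ring l0 V i"
    and "ring_order V i c"
  shows "(even l0 \<and> l0 \<ge> 2 \<longrightarrow>
            (\<forall>j < l0. c j \<in> black i \<longleftrightarrow> c (Suc j mod l0) \<notin> black i))
       \<and> (odd l0 \<longrightarrow>
            card {j. j < l0 \<and> c j \<in> black i \<and> c (Suc j mod l0) \<in> black i} = 1
          \<and> (\<forall>j < l0. \<not> (c j \<in> black i \<and> c (Suc j mod l0) \<in> black i)
                 \<longrightarrow> (c j \<in> black i \<longleftrightarrow> c (Suc j mod l0) \<notin> black i)))"
proof -
  have cV: "card V = l0" and rt: "ring_type V i" and bal: "balanced i"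
    using assms(1) unfolding two_d_ring_def by auto
  have len: "length i = 2 * l0" and seti: "set i = V" and l1: "2 * l0 \<ge> 1"
    using rt cV unfolding ring_type_def is_route_def by auto
  have crd: "\<forall>e \<in> UE i. card {k. k < length i \<and> uconn i k = e} = 2"
    using rt unfolding ring_type_def by blast
  have bij: "bij_betw c {..<l0} V" and UEi: "UE i = {{c j, c (Suc j mod l0)} | j. j < l0}"
    using assms(2) cV unfolding ring_order_def by auto
  have inj: "inj_on c {..<l0}" and img: "c ` {..<l0} = set i"
    using bij seti unfolding bij_betw_def by auto
  have "l0 \<ge> 3 \<or> l0 = 1 \<or> l0 = 2" using l1 by linarith
  moreover
  {
    assume "l0 \<ge> 3"
    from concrete3[OF len this inj img UEi crd bal] have ?thesis by blast
  }
  moreover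
  {
    assume l01: "l0 = 1"
    have i0: "i ! 0 \<in> set i" using len l01 by simp
    then have "i ! 0 = c 0" using img l01 by auto
    moreover have "i ! 0 \<in> black i" unfolding black_def using len l01 by force
    ultimately have cb: "c 0 \<in> black i" by simp
    have "{j. j < l0 \<and> c j \<in> black i \<and> c (Suc j mod l0) \<in> black i} = {0}"
      using cb l01 by auto
    moreover have "\<forall>j < l0. \<not> (c j \<in> black i \<and> c (Suc j mod l0) \<in> black i)
                 \<longrightarrow> (c j \<in> black i \<longleftrightarrow> c (Suc j mod l0) \<notin> black i)"
      using cb l01 by simp
    ultimately have ?thesis using l01 by simp
  }
  moreover
  {
    assume l02: "l0 = 2"
    have c01: "c 0 \<noteq> c 1" using inj l02 by (auto dest: inj_onD)
    have UE2: "UE i = {{c 0, c 1}}"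
    proof -
      have "{{c j, c (Suc j mod l0)} | j. j < l0} = {{c 0, c 1}}"
      proof (intro set_eqI iffI)
        fix x assume "x \<in> {{c j, c (Suc j mod l0)} | j. j < l0}"
        then obtain j where "j < 2" "x = {c j, c (Suc j mod 2)}" using l02 by auto
        then show "x \<in> {{c 0, c 1}}" by (cases j) (auto simp: insert_commute)
      next
        fix x assume "x \<in> {{c 0, c 1}}"
        then show "x \<in> {{c j, c (Suc j mod l0)} | j. j < l0}" using l02
          by (intro CollectI exI[of _ 0]) auto
      qed
      then show ?thesis using UEi by simp
    qed
    have st: "i ! k \<in> {c 0, c 1}" if "k < 4" for k
    proof -
      have "i ! k \<in> set i" using that len l02 by simp
      moreover have "{..<(2::nat)} = {0, 1}" by auto
      ultimately show ?thesis using img l02 by auto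
    qed
    have nx: "i ! (Suc k) \<noteq> i ! k" if "k < 3" for k
    proof -
      have "uconn i k \<in> UE i" unfolding UE_def using that len l02 by simp
      then have "{i ! k, i ! (Suc k)} = {c 0, c 1}"
        unfolding UE2 uconn_def etail_def ehead_def using that len l02 by simp
      then show ?thesis using c01 by (auto simp: doubleton_eq_iff)
    qed
    have i2: "i ! 2 = i ! 0"
      using st[of 0] st[of 1] st[of 2] nx[of 0] nx[of 1] by (auto simp: numeral_2_eq_2)
    have bl: "black i = {i ! 0}"
    proof -
      have "black i = {i ! k | k. k < 4 \<and> even k}" unfolding black_def using len l02 by simp
      also have "\<dots> = {i ! 0, i ! 2}"
      proof (intro set_eqI iffI)
        fix x assume "x \<in> {i ! k | k. k < 4 \<and> even k}"
        then obtain k where k: "x = i ! k" "k < 4" "even k" by blast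
        then have "k = 0 \<or> k = 2" by presburger
        then show "x \<in> {i ! 0, i ! 2}" using k by auto
      next
        fix x assume "x \<in> {i ! 0, i ! 2}"
        then show "x \<in> {i ! k | k. k < 4 \<and> even k}" by force
      qed
      finally show ?thesis using i2 by simp
    qed
    have "\<forall>j < l0. c j \<in> black i \<longleftrightarrow> c (Suc j mod l0) \<notin> black i"
    proof (intro allI impI)
      fix j assume "j < l0"
      then have j01: "j = 0 \<or> j = 1" using l02 by auto
      have s0: "i ! 0 = c 0 \<or> i ! 0 = c 1" using st[of 0] by simp
      have m1: "Suc 0 mod l0 = 1" "Suc 1 mod l0 = 0" using l02 by simp_all
      show "c j \<in> black i \<longleftrightarrow> c (Suc j mod l0) \<notin> black i"
        using j01
      proof (elim disjE)
        assume "j = 0"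
        then show ?thesis unfolding bl \<open>j = 0\<close> m1(1) singleton_iff using s0 c01 by metis
      next
        assume "j = 1"
        then show ?thesis unfolding bl \<open>j = 1\<close> m1(2) singleton_iff using s0 c01 by metis
      qed
    qed
    moreover have "\<not> odd l0" using l02 by simp
    ultimately have ?thesis by blast
  }
  ultimately show ?thesis by blast
qed

end
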